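(* Let $a\ge0$, let $f\colon[a,\infty)\to(0,\infty)$ be smooth, let $x$ be $C^1$, and let $(M,g,K)$ be the initial data set $M=[a,\infty)\times\mathbb S^2$, $g=ds^2+f(s)^2\gamma_*$, $K=x'(f(s))ds^2+x(f(s))f(s)\gamma_*$, with energy density satisfying $\mu\ge\tau$ for some $\tau\in\mathbb R$. Then for any $s_o>a$ with $f'(s_o)>0$ there exist $\delta>0$ and a smooth positive function $\widetilde f$ on $[s_o-\delta,\infty)$ with $\widetilde f=f$ on $[s_o,\infty)$ such that the initial data set $\widetilde M=[s_o-\delta,\infty)\times\mathbb S^2$, $\widetilde g=ds^2+\widetilde f^2\gamma_*$, $\widetilde K=x'(\widetilde f)ds^2+x(\widetilde f)\widetilde f\gamma_*$ has energy density $\widetilde\mu\ge\tau$ everywhere and $\widetilde\mu>\tau$ on $[s_o-\delta,s_o)$. Moreover, if in addition $f(s_o)>c>0$ and $f''(s_o)>0$, then $\delta$ can be chosen such that $\widetilde f(s_o-\delta)>c$ and $\widetilde f'(s_o-\delta)<f'(s_o)$.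
   Context: $\gamma_*$ is the standard round metric on $\mathbb S^2$; energy density $\mu=\tfrac12(R(g)+(\operatorname{tr}_gK)^2-|K|^2_g)$. *)

theory Defs
  imports "HOL-Analysis.Analysis"
begin

text \<open>A real function f is smooth on the closed ray [a,\<infinity>) with derivative tower D:
  D 0 = f on the ray and each D k has (one-sided at the endpoint) derivative D (Suc k)
  at every point of the ray. Thus D 1 = f', D 2 = f''.\<close>
definition smooth_ray :: "real \<Rightarrow> (real \<Rightarrow> real) \<Rightarrow> (nat \<Rightarrow> real \<Rightarrow> real) \<Rightarrow> bool" where
  "smooth_ray a f D \<longleftrightarrow> (\<forall>t\<ge>a. D 0 t = f t) \<and>
     (\<forall>k. \<forall>t\<ge>a. (D k has_real_derivative D (Suc k) t) (at t within {a..}))"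

definition C1_pos :: "(real \<Rightarrow> real) \<Rightarrow> (real \<Rightarrow> real) \<Rightarrow> bool" where
  "C1_pos x x' \<longleftrightarrow> (\<forall>y>0. (x has_real_derivative x' y) (at y)) \<and> continuous_on {0<..} x'"

text \<open>Scalar curvature of g = ds^2 + f(s)^2 \<gamma>_* on I \<times> S^2 (round unit S^2), at s,
  where f1 = f', f2 = f''.\<close>
definition warped_scalar :: "real \<Rightarrow> real \<Rightarrow> real \<Rightarrow> real" where
  "warped_scalar fs f1s f2s = 2 * (1 - f1s^2) / fs^2 - 4 * f2s / fs"

text \<open>For K = x'(f) ds^2 + x(f) f \<gamma>_*: in a g-orthonormal frame K = diag(x'(f), x(f)/f, x(f)/f).\<close>
definition trK :: "(real \<Rightarrow> real) \<Rightarrow> (real \<Rightarrow> real) \<Rightarrow> real \<Rightarrow> real" where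
  "trK x x' fs = x' fs + 2 * x fs / fs"

definition normK_sq :: "(real \<Rightarrow> real) \<Rightarrow> (real \<Rightarrow> real) \<Rightarrow> real \<Rightarrow> real" where
  "normK_sq x x' fs = (x' fs)^2 + 2 * (x fs / fs)^2"

definition energy_density ::
  "(real \<Rightarrow> real) \<Rightarrow> (real \<Rightarrow> real) \<Rightarrow> (nat \<Rightarrow> real \<Rightarrow> real) \<Rightarrow> real \<Rightarrow> real" where
  "energy_density x x' D s =
     (warped_scalar (D 0 s) (D 1 s) (D 2 s) + (trK x x' (D 0 s))^2 - normK_sq x x' (D 0 s)) / 2"

end

theory Submission
  imports Defs
begin


definition tower :: "real set \<Rightarrow> (nat \<Rightarrow> real \<Rightarrow> real) \<Rightarrow> bool" where
  "tower S D \<longleftrightarrow> (\<forall>k. \<forall>t\<in>S. (D k has_real_derivative D (Suc k) t) (at t within S))"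

definition smoothS :: "real set \<Rightarrow> (real \<Rightarrow> real) \<Rightarrow> bool" where
  "smoothS S h \<longleftrightarrow> (\<exists>D. D 0 = h \<and> tower S D)"

lemma smooth_coind:
  assumes cl: "\<forall>g\<in>P. \<exists>g'\<in>P. \<forall>t\<in>S. (g has_real_derivative g' t) (at t within S)"
    and h: "h \<in> P"
  shows "smoothS S h"
proof -
  define nx where "nx g = (SOME g'. g'\<in>P \<and> (\<forall>t\<in>S. (g has_real_derivative g' t) (at t within S)))" for g
  have nx: "nx g \<in> P \<and> (\<forall>t\<in>S. (g has_real_derivative nx g t) (at t within S))" if "g \<in> P" for g
  proof -
    have "\<exists>g'. g'\<in>P \<and> (\<forall>t\<in>S. (g has_real_derivative g' t) (at t within S))" using cl that by blast
    from someI_ex[OF this] show ?thesis unfolding nx_def .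
  qed
  define D where "D k = (nx ^^ k) h" for k
  have DP: "D k \<in> P" for k
    by (induction k) (auto simp: D_def h nx)
  have "tower S D" unfolding tower_def
  proof (intro allI ballI)
    fix k t assume "t \<in> S"
    then show "(D k has_real_derivative D (Suc k) t) (at t within S)"
      using nx[OF DP[of k]] by (simp add: D_def)
  qed
  moreover have "D 0 = h" by (simp add: D_def)
  ultimately show ?thesis unfolding smoothS_def by blast
qed

inductive_set gen :: "(real \<Rightarrow> real) set \<Rightarrow> (real \<Rightarrow> real) set" for B where
  base: "b \<in> B \<Longrightarrow> b \<in> gen B"
| const: "(\<lambda>t. c) \<in> gen B"
| add: "f \<in> gen B \<Longrightarrow> g \<in> gen B \<Longrightarrow> (\<lambda>t. f t + g t) \<in> gen B"
| diff: "f \<in> gen B \<Longrightarrow> g \<in> gen B \<Longrightarrow> (\<lambda>t. f t - g t) \<in> gen B"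
| mult: "f \<in> gen B \<Longrightarrow> g \<in> gen B \<Longrightarrow> (\<lambda>t. f t * g t) \<in> gen B"

lemma gen_closed:
  assumes "\<forall>b\<in>B. \<exists>b'\<in>gen B. \<forall>t\<in>S. (b has_real_derivative b' t) (at t within S)"
    and "g \<in> gen B"
  shows "\<exists>g'\<in>gen B. \<forall>t\<in>S. (g has_real_derivative g' t) (at t within S)"
  using assms(2)
proof induction
  case (base b) then show ?case using assms(1) by blast
next
  case (const c) then show ?case
    by (intro bexI[of _ "\<lambda>t. 0"]) (auto intro!: derivative_eq_intros gen.const)
next
  case (add f g)
  then obtain f' g' where f': "f' \<in> gen B" and g': "g' \<in> gen B"
    and df: "\<forall>t\<in>S. (f has_real_derivative f' t) (at t within S)"
    and dg: "\<forall>t\<in>S. (g has_real_derivative g' t) (at t within S)" by blast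
  have "(\<lambda>t. f' t + g' t) \<in> gen B" by (rule gen.add[OF f' g'])
  moreover have "\<forall>t\<in>S. ((\<lambda>t. f t + g t) has_real_derivative f' t + g' t) (at t within S)"
    using df dg by (auto intro: DERIV_add)
  ultimately show ?case by (intro bexI[of _ "\<lambda>t. f' t + g' t"]) auto
next
  case (diff f g)
  then obtain f' g' where f': "f' \<in> gen B" and g': "g' \<in> gen B"
    and df: "\<forall>t\<in>S. (f has_real_derivative f' t) (at t within S)"
    and dg: "\<forall>t\<in>S. (g has_real_derivative g' t) (at t within S)" by blast
  have "(\<lambda>t. f' t - g' t) \<in> gen B" by (rule gen.diff[OF f' g'])
  moreover have "\<forall>t\<in>S. ((\<lambda>t. f t - g t) has_real_derivative f' t - g' t) (at t within S)"
    using df dg by (auto intro: DERIV_diff)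
  ultimately show ?case by (intro bexI[of _ "\<lambda>t. f' t - g' t"]) auto
next
  case (mult f g)
  then obtain f' g' where f': "f' \<in> gen B" and g': "g' \<in> gen B"
    and df: "\<forall>t\<in>S. (f has_real_derivative f' t) (at t within S)"
    and dg: "\<forall>t\<in>S. (g has_real_derivative g' t) (at t within S)" by blast
  have "(\<lambda>t. f' t * g t + f t * g' t) \<in> gen B" by (rule gen.add[OF gen.mult[OF f' mult.hyps(2)] gen.mult[OF mult.hyps(1) g']])
  moreover have "\<forall>t\<in>S. ((\<lambda>t. f t * g t) has_real_derivative f' t * g t + f t * g' t) (at t within S)"
  proof
    fix t assume t: "t \<in> S"
    have "((\<lambda>t. f t * g t) has_real_derivative f t * g' t + f' t * g t) (at t within S)"
      using df dg t by (intro DERIV_mult') auto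
    then show "((\<lambda>t. f t * g t) has_real_derivative f' t * g t + f t * g' t) (at t within S)"
      by (simp add: add.commute)
  qed
  ultimately show ?case by (intro bexI[of _ "\<lambda>t. f' t * g t + f t * g' t"]) auto
qed

lemma gen_smooth:
  assumes "\<forall>b\<in>B. \<exists>b'\<in>gen B. \<forall>t\<in>S. (b has_real_derivative b' t) (at t within S)"
    and "g \<in> gen B"
  shows "smoothS S g"
  by (rule smooth_coind[of "gen B"]) (use gen_closed[OF assms(1)] assms(2) in auto)



definition flatG :: "real \<Rightarrow> nat \<Rightarrow> real \<Rightarrow> real" where
  "flatG c n s = (if s < c then exp (- 1 / (c - s)) / (c - s) ^ n else 0)"

lemma ev_left: "eventually (\<lambda>x. x < (c::real)) (at_left c)"
  using eventually_at_left_real[of "c-1" c] by (auto elim: eventually_mono)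

lemma flat_lim0: "((\<lambda>u::real. exp (- 1 / u) / u ^ m) \<longlongrightarrow> 0) (at_right 0)"
proof -
  have "((\<lambda>u. (inverse u) ^ m / exp (inverse u)) \<longlongrightarrow> (0::real)) (at_right 0)"
    by (rule filterlim_compose[OF tendsto_power_div_exp_0 filterlim_inverse_at_top_right])
  moreover have "eventually (\<lambda>u. (inverse u) ^ m / exp (inverse u) = exp (- 1 / u) / u ^ m) (at_right (0::real))"
  proof (rule always_eventually, rule allI)
    fix u :: real
    show "(inverse u) ^ m / exp (inverse u) = exp (- 1 / u) / u ^ m"
      by (metis (no_types, lifting) divide_inverse_commute exp_minus
    inverse_eq_divide minus_divide_left mult.commute power_inverse)
  qed
  ultimately show ?thesis by (rule Lim_transform_eventually)
qed

lemma flat_left: "((\<lambda>y. exp (- 1 / (c - y)) / (c - y) ^ m) \<longlongrightarrow> 0) (at_left (c::real))"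
proof -
  have "filterlim (\<lambda>y. c - y) (at_right 0) (at_left c)"
    unfolding filterlim_at
  proof
    show "\<forall>\<^sub>F x in at_left c. c - x \<in> {0<..} \<and> c - x \<noteq> 0"
      using ev_left[of c] by (rule eventually_mono) simp
    have "((\<lambda>y. c - y) \<longlongrightarrow> c - c) (at_left c)" by (intro tendsto_intros)
    then show "((\<lambda>y. c - y) \<longlongrightarrow> 0) (at_left c)" by simp
  qed
  from filterlim_compose[OF flat_lim0 this] show ?thesis by simp
qed

lemma flatG_deriv0: "(flatG c n has_real_derivative 0) (at c)"
  unfolding has_field_derivative_iff
proof -
  have L: "((\<lambda>y. (flatG c n y - flatG c n c) / (y - c)) \<longlongrightarrow> 0) (at_left c)"
  proof -
    have "((\<lambda>y. - (exp (- 1 / (c - y)) / (c - y) ^ Suc n)) \<longlongrightarrow> 0) (at_left c)"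
      using tendsto_minus[OF flat_left[of c "Suc n"]] by (simp only: minus_zero)
    moreover have "eventually (\<lambda>y. - (exp (- 1 / (c - y)) / (c - y) ^ Suc n) = (flatG c n y - flatG c n c) / (y - c)) (at_left c)"
      using ev_left[of c]
    proof (rule eventually_mono)
      fix y assume y: "y < c"
      have 1: "flatG c n c = 0" by (simp add: flatG_def)
      have 2: "flatG c n y / (y - c) = - (flatG c n y / (c - y))" by (subst minus_diff_eq[symmetric, of y c]) (rule divide_minus_right)
      have 3: "flatG c n y / (c - y) = exp (- 1 / (c - y)) / (c - y) ^ Suc n" using y by (simp add: flatG_def)
      show "- (exp (- 1 / (c - y)) / (c - y) ^ Suc n) = (flatG c n y - flatG c n c) / (y - c)"
        by (simp only: 1 diff_zero 2 3)
    qed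
    ultimately show ?thesis by (rule Lim_transform_eventually)
  qed
  have R: "((\<lambda>y. (flatG c n y - flatG c n c) / (y - c)) \<longlongrightarrow> 0) (at_right c)"
  proof -
    have "eventually (\<lambda>y. 0 = (flatG c n y - flatG c n c) / (y - c)) (at_right c)"
      using eventually_at_right_less[of c] by (rule eventually_mono) (simp add: flatG_def)
    then show ?thesis by (rule Lim_transform_eventually[OF tendsto_const])
  qed
  show "((\<lambda>y. (flatG c n y - flatG c n c) / (y - c)) \<longlongrightarrow> 0) (at c)"
    using L R by (subst filterlim_at_split) (rule conjI)
qed




lemma alg_flat: "(u::real) > 0 \<Longrightarrow> (E * ((0*u + (0-1))/(u*u)) * u^n - E*(real n*((0-1)*u^(n - Suc 0))))/(u^n*u^n) = real n * (E/u^Suc n) - E/u^Suc(Suc n)"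
proof (cases n)
  case 0
  assume "u > 0" then show ?thesis using 0 by (simp add: field_simps)
next
  case (Suc m)
  assume "u > 0" then show ?thesis using Suc by (simp add: field_simps)
qed

lemma flatG_deriv_lt:
  assumes "t < c"
  shows "(flatG c n has_real_derivative (real n * flatG c (Suc n) t - flatG c (Suc (Suc n)) t)) (at t)"
proof -
  have u: "c - t > 0" using assms by simp
  have "((\<lambda>s. exp (- 1 / (c - s)) / (c - s) ^ n) has_real_derivative
      (real n * flatG c (Suc n) t - flatG c (Suc (Suc n)) t)) (at t)"
    apply (intro derivative_eq_intros)
    using u apply simp_all
    using alg_flat[OF u, of "exp (- (1 / (c - t)))" n] assms by (simp add: flatG_def)
  then show ?thesis
    by (rule has_field_derivative_transform_within_open[where S="{..<c}"]) (auto simp: flatG_def assms)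
qed

lemma flatG_deriv:
  "(flatG c n has_real_derivative (real n * flatG c (Suc n) t - flatG c (Suc (Suc n)) t)) (at t)"
proof (cases t c rule: linorder_cases)
  case less then show ?thesis by (rule flatG_deriv_lt)
next
  case equal then show ?thesis using flatG_deriv0[of c n] by (simp add: flatG_def)
next
  case greater
  have "((\<lambda>s. 0) has_real_derivative 0) (at t)" by simp
  then have "(flatG c n has_real_derivative 0) (at t)"
    by (rule has_field_derivative_transform_within_open[where S="{c<..}"]) (use greater in \<open>auto simp: flatG_def\<close>)
  then show ?thesis using greater by (simp add: flatG_def)
qed




lemma exp_le_self: "(u::real) > 0 \<Longrightarrow> exp (- 1 / u) \<le> u"
proof -
  assume u: "u > 0"
  have "1 / u < exp (1 / u)" using exp_ge_add_one_self[of "1/u"] by linarith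
  then have "inverse (exp (1 / u)) \<le> inverse (1 / u)" using u by (intro le_imp_inverse_le) auto
  then show ?thesis using u by (simp add: exp_minus)
qed

definition Bf :: "real \<Rightarrow> real \<Rightarrow> real \<Rightarrow> real \<Rightarrow> real \<Rightarrow> real" where
  "Bf F0 F1 F2 u g = - (2*u^2 + u^2*g*u^2)*(F1^2/F0^2 + 2*F2/F0) + 2*F1*(1-2*u)/F0"

lemma ED:
  assumes "D 0 s = F0" "D 1 s = F1*(1+g*u^2)" "D 2 s = F2*((1+g*u^2)*(1+g*u^2)) + F1*(2*(g*u) - g)"
    "D' 0 s' = F0" "D' 1 s' = F1" "D' 2 s' = F2" "F0 \<noteq> 0"
  shows "energy_density x x' D s = energy_density x x' D' s' + g * Bf F0 F1 F2 u g"
  unfolding energy_density_def assms(1-6) warped_scalar_def Bf_def using assms(7)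
  by (simp add: field_simps power2_eq_square)

lemma near_left_pos:
  fixes g :: "real \<Rightarrow> real"
  assumes "continuous_on {b..c} g" "b < c" "g c > 0"
  shows "\<exists>d>0. d \<le> c - b \<and> (\<forall>s. c - d \<le> s \<and> s \<le> c \<longrightarrow> g s > 0)"
proof -
  have "c \<in> {b..c}" using assms(2) by simp
  with assms(1) obtain d where d: "d > 0" "\<forall>x'\<in>{b..c}. dist x' c < d \<longrightarrow> dist (g x') (g c) < g c"
    unfolding continuous_on_iff using assms(3) by blast
  define d' where "d' = min (d/2) (c - b)"
  have "d' > 0" "d' \<le> c - b" using d assms(2) by (auto simp: d'_def)
  moreover have "g s > 0" if "c - d' \<le> s" "s \<le> c" for s
  proof -
    have "s \<in> {b..c}" "dist s c < d" using that d by (auto simp: d'_def dist_real_def)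
    then have "dist (g s) (g c) < g c" using d by blast
    then show ?thesis by (auto simp: dist_real_def)
  qed
  ultimately show ?thesis by blast
qed




theorem lemma4p5:
  fixes a \<tau> so :: real
    and f x x' :: "real \<Rightarrow> real"
    and Df :: "nat \<Rightarrow> real \<Rightarrow> real"
  assumes "a \<ge> 0"
    and "smooth_ray a f Df"
    and "\<forall>s\<ge>a. f s > 0"
    and "C1_pos x x'"
    and "\<forall>s\<ge>a. energy_density x x' Df s \<ge> \<tau>"
    and "so > a"
    and "Df 1 so > 0"
  shows "(\<exists>\<delta>>0. \<exists>ft Dft. smooth_ray (so - \<delta>) ft Dft
            \<and> (\<forall>s\<ge>so - \<delta>. ft s > 0)
            \<and> (\<forall>s\<ge>so. ft s = f s)
            \<and> (\<forall>s\<ge>so - \<delta>. energy_density x x' Dft s \<ge> \<tau>)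
            \<and> (\<forall>s\<in>{so - \<delta>..<so}. energy_density x x' Dft s > \<tau>))
       \<and> (\<forall>c. f so > c \<and> c > 0 \<and> Df 2 so > 0 \<longrightarrow>
           (\<exists>\<delta>>0. \<exists>ft Dft. smooth_ray (so - \<delta>) ft Dft
            \<and> (\<forall>s\<ge>so - \<delta>. ft s > 0)
            \<and> (\<forall>s\<ge>so. ft s = f s)
            \<and> (\<forall>s\<ge>so - \<delta>. energy_density x x' Dft s \<ge> \<tau>)
            \<and> (\<forall>s\<in>{so - \<delta>..<so}. energy_density x x' Dft s > \<tau>)
            \<and> ft (so - \<delta>) > c
            \<and> Dft 1 (so - \<delta>) < Df 1 so))"
proof -
  have Df0: "\<And>t. t \<ge> a \<Longrightarrow> Df 0 t = f t"
    and dDf: "\<And>k t. t \<ge> a \<Longrightarrow> (Df k has_real_derivative Df (Suc k) t) (at t within {a..})"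
    using assms(2) unfolding smooth_ray_def by auto
  define G where "G = flatG so"
  define \<sigma> where "\<sigma> s = s - G 0 s" for s
  define b0 where "b0 = (so + a) / 2"
  define S0 where "S0 = {b0..}"
  have b0: "a < b0" "b0 < so" using assms(6) by (auto simp: b0_def)
  have G_ge: "s \<ge> so \<Longrightarrow> G n s = 0" for n s by (simp add: G_def flatG_def)
  have G_pos: "s < so \<Longrightarrow> G n s > 0" for n s by (simp add: G_def flatG_def)
  have dG: "(G n has_real_derivative (real n * G (Suc n) t - G (Suc (Suc n)) t)) (at t)" for n t
    unfolding G_def by (rule flatG_deriv)
  have \<sigma>_id: "s \<ge> so \<Longrightarrow> \<sigma> s = s" for s by (simp add: \<sigma>_def G_ge)
  have \<sigma>_ge: "\<sigma> s \<ge> a" if "s \<in> S0" for s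
  proof (cases "s \<ge> so")
    case True then show ?thesis using \<sigma>_id assms(6) by auto
  next
    case False
    then have "G 0 s \<le> so - s" using exp_le_self[of "so - s"] by (simp add: G_def flatG_def)
    then show ?thesis using that by (simp add: \<sigma>_def S0_def b0_def)
  qed
  have d\<sigma>: "(\<sigma> has_real_derivative 1 + G 2 t) (at t)" for t
    unfolding \<sigma>_def[abs_def] using dG[of 0 t] by (auto intro!: derivative_eq_intros simp: numeral_2_eq_2)
  have dch: "((\<lambda>s. Df k (\<sigma> s)) has_real_derivative Df (Suc k) (\<sigma> t) * (1 + G 2 t)) (at t within S0)"
    if "t \<in> S0" for k t
  proof -
    have "\<sigma> ` S0 \<subseteq> {a..}" using \<sigma>_ge by auto
    then have "(Df k has_real_derivative Df (Suc k) (\<sigma> t)) (at (\<sigma> t) within \<sigma> ` S0)"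
      using dDf[of "\<sigma> t" k] \<sigma>_ge[OF that] by (auto intro: has_field_derivative_subset)
    from DERIV_image_chain[OF this has_field_derivative_at_within[OF d\<sigma>]]
    show ?thesis by (simp add: o_def)
  qed
  define B where "B = range (\<lambda>k s. Df k (\<sigma> s)) \<union> range G"
  have inB1: "(\<lambda>s. Df k (\<sigma> s)) \<in> gen B" for k
    by (rule gen.base) (simp add: B_def)
  have inB2: "G n \<in> gen B" for n
    by (rule gen.base) (simp add: B_def)
  have Bcl: "\<forall>b\<in>B. \<exists>b'\<in>gen B. \<forall>t\<in>S0. (b has_real_derivative b' t) (at t within S0)"
  proof
    fix b assume "b \<in> B"
    then consider k where "b = (\<lambda>s. Df k (\<sigma> s))" | n where "b = G n" unfolding B_def by blast
    then show "\<exists>b'\<in>gen B. \<forall>t\<in>S0. (b has_real_derivative b' t) (at t within S0)"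
    proof cases
      case 1
      have "(\<lambda>s. 1 + G 2 s) \<in> gen B" using gen.add[OF gen.const[where c=1] inB2[of 2]] by simp
      then have "(\<lambda>s. Df (Suc k) (\<sigma> s) * (1 + G 2 s)) \<in> gen B" using gen.mult[OF inB1[of "Suc k"]] by simp
      then show ?thesis using 1 dch by (intro bexI[of _ "\<lambda>s. Df (Suc k) (\<sigma> s) * (1 + G 2 s)"]) auto
    next
      case 2
      have "(\<lambda>s. real n * G (Suc n) s) \<in> gen B" using gen.mult[OF gen.const[where c="real n"] inB2[of "Suc n"]] by simp
      then have "(\<lambda>s. real n * G (Suc n) s - G (Suc (Suc n)) s) \<in> gen B" using gen.diff[OF _ inB2[of "Suc (Suc n)"]] by simp
      then show ?thesis using 2 dG
        by (intro bexI[of _ "\<lambda>s. real n * G (Suc n) s - G (Suc (Suc n)) s"]) (auto intro: has_field_derivative_at_within)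
    qed
  qed
  define ft0 where "ft0 s = Df 0 (\<sigma> s)" for s
  define ft1 where "ft1 s = Df 1 (\<sigma> s) * (1 + G 2 s)" for s
  define ft2 where "ft2 s = Df 2 (\<sigma> s) * ((1 + G 2 s) * (1 + G 2 s)) + Df 1 (\<sigma> s) * (2 * G 3 s - G 4 s)" for s
  have ft2_gen: "ft2 \<in> gen B"
  proof -
    have g1: "(\<lambda>s. 1 + G 2 s) \<in> gen B" using gen.add[OF gen.const[where c=1] inB2[of 2]] by simp
    have g2: "(\<lambda>s. (1 + G 2 s) * (1 + G 2 s)) \<in> gen B" using gen.mult[OF g1 g1] by simp
    have g3: "(\<lambda>s. Df 2 (\<sigma> s) * ((1 + G 2 s) * (1 + G 2 s))) \<in> gen B" using gen.mult[OF inB1[of 2] g2] by simp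
    have g4: "(\<lambda>s. 2 * G 3 s) \<in> gen B" using gen.mult[OF gen.const[where c=2] inB2[of 3]] by simp
    have g5: "(\<lambda>s. 2 * G 3 s - G 4 s) \<in> gen B" using gen.diff[OF g4 inB2[of 4]] by simp
    have g6: "(\<lambda>s. Df 1 (\<sigma> s) * (2 * G 3 s - G 4 s)) \<in> gen B" using gen.mult[OF inB1[of 1] g5] by simp
    show ?thesis using gen.add[OF g3 g6] unfolding ft2_def[abs_def] by simp
  qed
  obtain D2 where D2: "D2 0 = ft2" "tower S0 D2"
    using gen_smooth[OF Bcl ft2_gen] unfolding smoothS_def by blast
  define Dft where "Dft k = (case k of 0 \<Rightarrow> ft0 | Suc 0 \<Rightarrow> ft1 | Suc (Suc j) \<Rightarrow> D2 j)" for k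
  have Dft0: "Dft 0 = ft0" and Dft1: "Dft 1 = ft1" and Dft2: "Dft 2 = ft2"
    by (simp_all add: Dft_def D2 numeral_2_eq_2)
  have Dft1': "Dft (Suc 0) = ft1" by (simp add: Dft_def)
  have tS0: "tower S0 Dft"
    unfolding tower_def
  proof (intro allI ballI)
    fix k t assume t: "t \<in> S0"
    show "(Dft k has_real_derivative Dft (Suc k) t) (at t within S0)"
    proof (cases k)
      case 0
      then show ?thesis using dch[OF t, of 0] by (simp add: Dft_def ft0_def[abs_def] ft1_def)
    next
      case (Suc j)
      note kj = Suc
      show ?thesis
      proof (cases j)
        case 0
        have e: "(G 2 has_real_derivative 2 * G 3 t - G 4 t) (at t)"
          using dG[of 2 t] by (simp add: eval_nat_numeral)
        have "((\<lambda>s. 1 + G 2 s) has_real_derivative 0 + (2 * G 3 t - G 4 t)) (at t within S0)"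
          by (rule DERIV_add[OF DERIV_const has_field_derivative_at_within[OF e]])
        then have "((\<lambda>s. 1 + G 2 s) has_real_derivative 2 * G 3 t - G 4 t) (at t within S0)" by simp
        from DERIV_mult'[OF dch[OF t, of 1] this]
        have "(ft1 has_real_derivative ft2 t) (at t within S0)"
          unfolding ft1_def[abs_def] ft2_def by (simp add: algebra_simps numeral_2_eq_2)
        then show ?thesis using kj 0 by (simp add: Dft_def D2)
      next
        case (Suc i)
        then show ?thesis using kj D2(2) t unfolding tower_def by (simp add: Dft_def)
      qed
    qed
  qed
  have S0sub: "{b..} \<subseteq> S0" if "b \<ge> b0" for b using that by (auto simp: S0_def)
  have contD: "continuous_on S0 (\<lambda>s. Df k (\<sigma> s))" for k
    unfolding continuous_on_eq_continuous_within using dch by (blast intro: DERIV_continuous)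
  have contG: "continuous_on A (G n)" for A n
    by (rule continuous_at_imp_continuous_on) (blast intro: DERIV_isCont dG)
  have F0pos: "Df 0 (\<sigma> s) > 0" if "s \<in> S0" for s
    using Df0[OF \<sigma>_ge[OF that]] assms(3) \<sigma>_ge[OF that] by auto
  define Bfun where "Bfun s = Bf (Df 0 (\<sigma> s)) (Df 1 (\<sigma> s)) (Df 2 (\<sigma> s)) (so - s) (G 4 s)" for s
  have I0: "{b0..so} \<subseteq> S0" by (auto simp: S0_def)
  have "continuous_on {b0..so} Bfun"
  proof -
    have c: "continuous_on {b0..so} (\<lambda>s. Df k (\<sigma> s))" for k by (rule continuous_on_subset[OF contD I0])
    have nz: "\<forall>s\<in>{b0..so}. Df 0 (\<sigma> s) \<noteq> 0" using F0pos I0 by force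
    have nz2: "\<forall>s\<in>{b0..so}. (Df 0 (\<sigma> s))^2 \<noteq> 0" using nz by simp
    show ?thesis unfolding Bfun_def[abs_def] Bf_def
      by (intro continuous_intros c contG nz nz2)
  qed
  moreover have "Bfun so > 0"
    using F0pos[of so] assms(7) b0 by (simp add: Bfun_def Bf_def \<sigma>_id G_ge S0_def)
  ultimately obtain \<delta>1 where \<delta>1: "\<delta>1 > 0" "\<delta>1 \<le> so - b0" "\<forall>s. so - \<delta>1 \<le> s \<and> s \<le> so \<longrightarrow> Bfun s > 0"
    using near_left_pos[of b0 so Bfun] b0 by blast
  have Grel: "G 2 s = G 4 s * (so - s)^2" "G 3 s = G 4 s * (so - s)" if "s < so" for s
  proof -
    have u: "so - s \<noteq> 0" using that by simp
    have r: "\<And>E u::real. u \<noteq> 0 \<Longrightarrow> E / u^2 = E / u^4 * u^2 \<and> E / u^3 = E / u^4 * u"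
      by (simp add: field_simps eval_nat_numeral)
    show "G 2 s = G 4 s * (so - s)^2" "G 3 s = G 4 s * (so - s)"
      using that r[OF u, of "exp (- 1 / (so - s))"] by (simp_all add: G_def flatG_def)
  qed
  have P: "smooth_ray (so - \<delta>) ft0 Dft
            \<and> (\<forall>s\<ge>so - \<delta>. ft0 s > 0)
            \<and> (\<forall>s\<ge>so. ft0 s = f s)
            \<and> (\<forall>s\<ge>so - \<delta>. energy_density x x' Dft s \<ge> \<tau>)
            \<and> (\<forall>s\<in>{so - \<delta>..<so}. energy_density x x' Dft s > \<tau>)"
    if d: "\<delta> > 0" "\<delta> \<le> \<delta>1" for \<delta>
  proof -
    have sub: "{so - \<delta>..} \<subseteq> S0" using S0sub[of "so - \<delta>"] d \<delta>1 by auto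
    have sm: "smooth_ray (so - \<delta>) ft0 Dft"
      unfolding smooth_ray_def
    proof (intro conjI allI impI)
      fix t assume "so - \<delta> \<le> t" then show "Dft 0 t = ft0 t" by (simp add: Dft0)
    next
      fix k t assume t: "so - \<delta> \<le> t"
      then have "t \<in> S0" using sub by auto
      then have "(Dft k has_real_derivative Dft (Suc k) t) (at t within S0)" using tS0 unfolding tower_def by blast
      then show "(Dft k has_real_derivative Dft (Suc k) t) (at t within {so - \<delta>..})"
        by (rule has_field_derivative_subset[OF _ sub])
    qed
    have pos: "\<forall>s\<ge>so - \<delta>. ft0 s > 0" using F0pos sub by (auto simp: ft0_def)
    have eq: "\<forall>s\<ge>so. ft0 s = f s" using Df0 assms(6) by (simp add: ft0_def \<sigma>_id)
    have right: "energy_density x x' Dft s = energy_density x x' Df s" if "s \<ge> so" for s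
    proof -
      have "Dft 0 s = Df 0 s" "Dft 1 s = Df 1 s" "Dft 2 s = Df 2 s"
        by (simp only: Dft0 Dft1 Dft2, simp add: that ft0_def ft1_def ft2_def \<sigma>_id G_ge)+
      then show ?thesis unfolding energy_density_def by simp
    qed
    have left: "energy_density x x' Dft s > \<tau>" if s: "so - \<delta> \<le> s" "s < so" for s
    proof -
      have sS0: "s \<in> S0" using sub s by auto
      have "energy_density x x' Dft s = energy_density x x' Df (\<sigma> s) + G 4 s * Bfun s"
        unfolding Bfun_def
      proof (rule ED)
        show "Dft 0 s = Df 0 (\<sigma> s)" by (simp add: Dft0 ft0_def)
        show "Dft 1 s = Df 1 (\<sigma> s) * (1 + G 4 s * (so - s)^2)" using Grel(1)[OF s(2)] by (simp add: Dft1' ft1_def)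
        show "Dft 2 s = Df 2 (\<sigma> s) * ((1 + G 4 s * (so - s)^2) * (1 + G 4 s * (so - s)^2)) + Df 1 (\<sigma> s) * (2 * (G 4 s * (so - s)) - G 4 s)"
          using Grel[OF s(2)] by (simp add: Dft2 ft2_def)
        show "Df 0 (\<sigma> s) \<noteq> 0" using F0pos[OF sS0] by simp
      qed simp_all
      moreover have "energy_density x x' Df (\<sigma> s) \<ge> \<tau>" using assms(5) \<sigma>_ge[OF sS0] by blast
      moreover have "G 4 s * Bfun s > 0" using G_pos[OF s(2)] \<delta>1(3) s d by simp
      ultimately show ?thesis by linarith
    qed
    have ge: "\<forall>s\<ge>so - \<delta>. energy_density x x' Dft s \<ge> \<tau>"
    proof (intro allI impI)
      fix s assume s: "so - \<delta> \<le> s"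
      show "energy_density x x' Dft s \<ge> \<tau>"
      proof (cases "s < so")
        case True then show ?thesis using left s by fastforce
      next
        case False then show ?thesis using right assms(5) assms(6) by auto
      qed
    qed
    show ?thesis using sm pos eq ge left by auto
  qed
  have part1: "\<exists>\<delta>>0. \<exists>ft Dft. smooth_ray (so - \<delta>) ft Dft
            \<and> (\<forall>s\<ge>so - \<delta>. ft s > 0)
            \<and> (\<forall>s\<ge>so. ft s = f s)
            \<and> (\<forall>s\<ge>so - \<delta>. energy_density x x' Dft s \<ge> \<tau>)
            \<and> (\<forall>s\<in>{so - \<delta>..<so}. energy_density x x' Dft s > \<tau>)"
    using P[of \<delta>1] \<delta>1 by blast
  show ?thesis
  proof (intro conjI part1 allI impI)
    fix c assume c: "f so > c \<and> c > 0 \<and> Df 2 so > 0"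
    have "continuous_on {b0..so} (\<lambda>s. ft0 s - c)"
      unfolding ft0_def[abs_def] by (intro continuous_intros continuous_on_subset[OF contD I0])
    moreover have "ft0 so - c > 0" using Df0[of so] assms(6) c by (simp add: ft0_def \<sigma>_id)
    ultimately obtain \<delta>2 where \<delta>2: "\<delta>2 > 0" "\<forall>s. so - \<delta>2 \<le> s \<and> s \<le> so \<longrightarrow> ft0 s - c > 0"
      using near_left_pos[of b0 so "\<lambda>s. ft0 s - c"] b0 by blast
    have soS0: "so \<in> S0" using b0 by (simp add: S0_def)
    from tS0 soS0 have "(Dft 1 has_real_derivative Dft (Suc 1) so) (at so within S0)"
      unfolding tower_def by blast
    then have "(ft1 has_real_derivative ft2 so) (at so within S0)"
      by (simp only: Dft1 Dft2 Suc_1)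
    then have "(ft1 has_real_derivative ft2 so) (at so within {b0<..})"
      by (rule has_field_derivative_subset) (auto simp: S0_def)
    then have dft1: "(ft1 has_real_derivative ft2 so) (at so)"
      using at_within_open[of so "{b0<..}"] b0 by simp
    have "ft2 so > 0" using c by (simp add: ft2_def \<sigma>_id G_ge)
    from DERIV_pos_inc_left[OF dft1 this] obtain d3 where d3: "d3 > 0" "\<forall>h>0. h < d3 \<longrightarrow> ft1 (so - h) < ft1 so"
      by blast
    define \<delta> where "\<delta> = min \<delta>1 (min \<delta>2 (d3 / 2))"
    have \<delta>: "\<delta> > 0" "\<delta> \<le> \<delta>1" "\<delta> \<le> \<delta>2" "\<delta> < d3"
      using \<delta>1 \<delta>2 d3 by (auto simp: \<delta>_def)
    have "ft0 (so - \<delta>) > c" using \<delta>2(2)[rule_format, of "so - \<delta>"] \<delta> by auto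
    moreover have "Dft 1 (so - \<delta>) < Df 1 so"
      using d3(2)[rule_format, of \<delta>] \<delta> by (simp add: Dft1' ft1_def \<sigma>_id G_ge)
    ultimately show "\<exists>\<delta>>0. \<exists>ft Dft. smooth_ray (so - \<delta>) ft Dft
            \<and> (\<forall>s\<ge>so - \<delta>. ft s > 0)
            \<and> (\<forall>s\<ge>so. ft s = f s)
            \<and> (\<forall>s\<ge>so - \<delta>. energy_density x x' Dft s \<ge> \<tau>)
            \<and> (\<forall>s\<in>{so - \<delta>..<so}. energy_density x x' Dft s > \<tau>)
            \<and> ft (so - \<delta>) > c
            \<and> Dft 1 (so - \<delta>) < Df 1 so"
      using P[of \<delta>] \<delta> by blast
  qed
qed


end
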